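(* Let $G$ be a topological group, $\mathcal{Y}$ a Hausdorff locally convex space, and $\pi\colon G\to\mathrm{End}(\mathcal{Y})$ a representation such that the action $(g,y)\mapsto\pi(g)y$, $G\times\mathcal{Y}\to\mathcal{Y}$, is continuous and there is a neighborhood $V$ of $\mathbf{1}\in G$ with $\pi(V)$ equicontinuous on $\mathcal{Y}$. Then $\mathcal{D}^1_{d\pi}=\mathcal{D}^{1,\mathrm{lin}}_{d\pi}$. If moreover (1) $\mathfrak{L}(G)$ is endowed with a Baire topology that is stronger than the compact-open topology; (2) for every $X_1,X_2\in\mathfrak{L}(G)$ there exists $X\in\mathfrak{L}(G)$ with $X=X_1+X_2$ (in the sense below), and $\mathfrak{L}(G)$, with this addition and scalar multiplication $(tX)(s)=X(ts)$, is a topological vector space for the topology in (1); (3) $\mathcal{Y}$ is metrizable; then also $\mathcal{D}^1_{d\pi}=\mathcal{D}^{1,\mathrm{cont}}_{d\pi}$, where continuity in the definition of $\mathcal{D}^{1,\mathrm{cont}}_{d\pi}$ refers to the topology on $\mathfrak{L}(G)$ from (1).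
   Context: All topological groups are Hausdorff; $\mathrm{End}(\mathcal{Y})$ is the algebra of continuous linear operators on $\mathcal{Y}$. $\mathfrak{L}(G)$ is the set of continuous homomorphisms $(\mathbb{R},+)\to G$; the compact-open topology on it is uniform convergence on compact subsets of $\mathbb{R}$. For $X,X_1,X_2\in\mathfrak{L}(G)$ one writes $X=X_1+X_2$ if $X(t)=\lim_{n\to\infty}(X_1(t/n)X_2(t/n))^n$ for all $t\in\mathbb{R}$, uniformly on compact subsets of $\mathbb{R}$. For $X\in\mathfrak{L}(G)$, $d\pi(X)$ is the infinitesimal generator of $t\mapsto\pi(X(t))$, with domain $\mathcal{D}(d\pi(X))$ the set of $y$ for which $d\pi(X)y:=\lim_{t\to0}\frac{\pi(X(t))y-y}{t}$ exists. Define $\mathcal{D}^1_{d\pi}=\bigcap_{X\in\mathfrak{L}(G)}\mathcal{D}(d\pi(X))$; $\mathcal{D}^{1,\mathrm{cont}}_{d\pi}=\{y\in\mathcal{D}^1_{d\pi}\mid X\mapsto d\pi(X)y \text{ is continuous } \mathfrak{L}(G)\to\mathcal{Y}\}$; $\mathcal{D}^{1,\mathrm{lin}}_{d\pi}=\{y\in\mathcal{D}^1_{d\pi}\mid d\pi(X)y=d\pi(X_1)y+d\pi(X_2)y \text{ whenever } X,X_1,X_2\in\mathfrak{L}(G),\ X=X_1+X_2\}$. *)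

theory Defs
  imports "HOL-Analysis.Analysis" "HOL-Algebra.Group"
begin

definition topological_group :: "('g, 'm) monoid_scheme \<Rightarrow> 'g topology \<Rightarrow> bool" where
  "topological_group G TG \<longleftrightarrow>
     group G \<and> topspace TG = carrier G \<and> Hausdorff_space TG \<and>
     continuous_map (prod_topology TG TG) TG (\<lambda>(g, h). g \<otimes>\<^bsub>G\<^esub> h) \<and>
     continuous_map TG TG (\<lambda>g. inv\<^bsub>G\<^esub> g)"

definition Lie_set :: "('g, 'm) monoid_scheme \<Rightarrow> 'g topology \<Rightarrow> (real \<Rightarrow> 'g) set" where
  "Lie_set G TG = {X. continuous_map euclideanreal TG X \<and>
                      (\<forall>s t. X (s + t) = X s \<otimes>\<^bsub>G\<^esub> X t)}"

text \<open>X = X1 + X2: X(t) = lim_n (X1(t/n) X2(t/n))^n, uniformly on compact subsets of R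
(uniform convergence in the group uniformity: for every neighbourhood U of 1,
eventually X(t)^-1 (X1(t/n)X2(t/n))^n lies in U for all t in K).\<close>

definition Lie_sum :: "('g, 'm) monoid_scheme \<Rightarrow> 'g topology \<Rightarrow>
     (real \<Rightarrow> 'g) \<Rightarrow> (real \<Rightarrow> 'g) \<Rightarrow> (real \<Rightarrow> 'g) \<Rightarrow> bool" where
  "Lie_sum G TG X X1 X2 \<longleftrightarrow>
     (\<forall>K::real set. compact K \<longrightarrow>
        (\<forall>U. openin TG U \<and> \<one>\<^bsub>G\<^esub> \<in> U \<longrightarrow>
           (\<forall>\<^sub>F n in sequentially. \<forall>t\<in>K.
              inv\<^bsub>G\<^esub> (X t) \<otimes>\<^bsub>G\<^esub> ((X1 (t / real n) \<otimes>\<^bsub>G\<^esub> X2 (t / real n)) [^]\<^bsub>G\<^esub> n) \<in> U)))"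

text \<open>The (unique, if it exists) sum in L(G), and scalar multiplication (tX)(s) = X(ts).\<close>

definition Lie_add :: "('g, 'm) monoid_scheme \<Rightarrow> 'g topology \<Rightarrow>
     (real \<Rightarrow> 'g) \<Rightarrow> (real \<Rightarrow> 'g) \<Rightarrow> (real \<Rightarrow> 'g)" where
  "Lie_add G TG X1 X2 = (THE X. X \<in> Lie_set G TG \<and> Lie_sum G TG X X1 X2)"

definition Lie_smult :: "real \<Rightarrow> (real \<Rightarrow> 'g) \<Rightarrow> (real \<Rightarrow> 'g)" where
  "Lie_smult t X = (\<lambda>s. X (t * s))"

definition topological_vector_space_type :: "'y::{real_vector, t2_space} itself \<Rightarrow> bool" where
  "topological_vector_space_type _ \<longleftrightarrow>
     continuous_on UNIV (\<lambda>(x::'y, y). x + y) \<and>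
     continuous_on UNIV (\<lambda>(a::real, x::'y). a *\<^sub>R x)"

definition locally_convex_type :: "'y::{real_vector, t2_space} itself \<Rightarrow> bool" where
  "locally_convex_type _ \<longleftrightarrow>
     (\<forall>W::'y set. open W \<and> 0 \<in> W \<longrightarrow> (\<exists>U. open U \<and> convex U \<and> 0 \<in> U \<and> U \<subseteq> W))"

definition equicontinuous_family :: "('y::{real_vector, t2_space} \<Rightarrow> 'y) set \<Rightarrow> bool" where
  "equicontinuous_family F \<longleftrightarrow>
     (\<forall>W. open W \<and> 0 \<in> W \<longrightarrow> (\<exists>U. open U \<and> 0 \<in> U \<and> (\<forall>A\<in>F. A ` U \<subseteq> W)))"

definition continuous_representation ::
  "('g, 'm) monoid_scheme \<Rightarrow> 'g topology \<Rightarrow> ('g \<Rightarrow> 'y::{real_vector, t2_space} \<Rightarrow> 'y) \<Rightarrow> bool" where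
  "continuous_representation G TG \<pi> \<longleftrightarrow>
     (\<forall>g\<in>carrier G. linear (\<pi> g) \<and> continuous_on UNIV (\<pi> g)) \<and>
     \<pi> \<one>\<^bsub>G\<^esub> = id \<and>
     (\<forall>g\<in>carrier G. \<forall>h\<in>carrier G. \<pi> (g \<otimes>\<^bsub>G\<^esub> h) = \<pi> g \<circ> \<pi> h) \<and>
     continuous_map (prod_topology TG euclidean) euclidean (\<lambda>(g, y). \<pi> g y)"

definition diff_quot :: "('g \<Rightarrow> 'y::real_vector \<Rightarrow> 'y) \<Rightarrow> (real \<Rightarrow> 'g) \<Rightarrow> 'y \<Rightarrow> real \<Rightarrow> 'y" where
  "diff_quot \<pi> X y t = inverse t *\<^sub>R (\<pi> (X t) y - y)"

definition gen_domain :: "('g \<Rightarrow> 'y::{real_vector, t2_space} \<Rightarrow> 'y) \<Rightarrow> (real \<Rightarrow> 'g) \<Rightarrow> 'y set" where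
  "gen_domain \<pi> X = {y. \<exists>v. (diff_quot \<pi> X y \<longlongrightarrow> v) (at 0)}"

definition dpi :: "('g \<Rightarrow> 'y::{real_vector, t2_space} \<Rightarrow> 'y) \<Rightarrow> (real \<Rightarrow> 'g) \<Rightarrow> 'y \<Rightarrow> 'y" where
  "dpi \<pi> X y = Lim (at 0) (diff_quot \<pi> X y)"

definition D1 :: "('g, 'm) monoid_scheme \<Rightarrow> 'g topology \<Rightarrow> ('g \<Rightarrow> 'y::{real_vector, t2_space} \<Rightarrow> 'y) \<Rightarrow> 'y set" where
  "D1 G TG \<pi> = (\<Inter>X\<in>Lie_set G TG. gen_domain \<pi> X)"

definition D1_lin :: "('g, 'm) monoid_scheme \<Rightarrow> 'g topology \<Rightarrow> ('g \<Rightarrow> 'y::{real_vector, t2_space} \<Rightarrow> 'y) \<Rightarrow> 'y set" where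
  "D1_lin G TG \<pi> = {y \<in> D1 G TG \<pi>. \<forall>X\<in>Lie_set G TG. \<forall>X1\<in>Lie_set G TG. \<forall>X2\<in>Lie_set G TG.
        Lie_sum G TG X X1 X2 \<longrightarrow> dpi \<pi> X y = dpi \<pi> X1 y + dpi \<pi> X2 y}"

definition D1_cont :: "('g, 'm) monoid_scheme \<Rightarrow> 'g topology \<Rightarrow> (real \<Rightarrow> 'g) topology \<Rightarrow>
     ('g \<Rightarrow> 'y::{real_vector, t2_space} \<Rightarrow> 'y) \<Rightarrow> 'y set" where
  "D1_cont G TG TL \<pi> = {y \<in> D1 G TG \<pi>. continuous_map TL euclidean (\<lambda>X. dpi \<pi> X y)}"

definition Baire_space :: "'a topology \<Rightarrow> bool" where
  "Baire_space T \<longleftrightarrow>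
     (\<forall>\<U>. countable \<U> \<and> (\<forall>U\<in>\<U>. openin T U \<and> T closure_of U = topspace T) \<longrightarrow>
          T closure_of (topspace T \<inter> \<Inter>\<U>) = topspace T)"

text \<open>TL is stronger (finer) than the compact-open topology on L(G): every subbasic
compact-open set {X. X(K) \<subseteq> U} (K compact, U open) is open.\<close>

definition finer_than_compact_open :: "('g, 'm) monoid_scheme \<Rightarrow> 'g topology \<Rightarrow> (real \<Rightarrow> 'g) topology \<Rightarrow> bool" where
  "finer_than_compact_open G TG TL \<longleftrightarrow>
     (\<forall>K U. compact K \<and> openin TG U \<longrightarrow> openin TL {X \<in> Lie_set G TG. X ` K \<subseteq> U})"

definition Lie_tvs :: "('g, 'm) monoid_scheme \<Rightarrow> 'g topology \<Rightarrow> (real \<Rightarrow> 'g) topology \<Rightarrow> bool" where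
  "Lie_tvs G TG TL \<longleftrightarrow>
    (let L = Lie_set G TG; add = Lie_add G TG; z = (\<lambda>_::real. \<one>\<^bsub>G\<^esub>) in
     topspace TL = L \<and>
     (\<forall>X\<in>L. \<forall>Y\<in>L. add X Y \<in> L) \<and>
     (\<forall>a. \<forall>X\<in>L. Lie_smult a X \<in> L) \<and>
     (\<forall>X\<in>L. \<forall>Y\<in>L. \<forall>Z\<in>L. add (add X Y) Z = add X (add Y Z)) \<and>
     (\<forall>X\<in>L. \<forall>Y\<in>L. add X Y = add Y X) \<and>
     (\<forall>X\<in>L. add z X = X) \<and>
     (\<forall>X\<in>L. add X (Lie_smult (-1) X) = z) \<and>
     (\<forall>a b. \<forall>X\<in>L. Lie_smult (a + b) X = add (Lie_smult a X) (Lie_smult b X)) \<and>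
     (\<forall>a. \<forall>X\<in>L. \<forall>Y\<in>L. Lie_smult a (add X Y) = add (Lie_smult a X) (Lie_smult a Y)) \<and>
     continuous_map (prod_topology TL TL) TL (\<lambda>(X, Y). add X Y) \<and>
     continuous_map (prod_topology euclideanreal TL) TL (\<lambda>(a, X). Lie_smult a X))"

end

theory Submission
  imports Defs
begin


context
  fixes ty :: "'y::{real_vector,t2_space} itself"
  assumes tvs: "topological_vector_space_type TYPE('y)"
begin

lemma tvs_tendsto_add:
  fixes f g :: "'b \<Rightarrow> 'y"
  assumes "(f \<longlongrightarrow> a) F" "(g \<longlongrightarrow> b) F"
  shows "((\<lambda>x. f x + g x) \<longlongrightarrow> a + b) F"
proof -
  have c: "continuous_on UNIV (\<lambda>(x::'y, y). x + y)"
    using tvs unfolding topological_vector_space_type_def by blast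
  have "isCont (\<lambda>(x::'y, y). x + y) (a, b)"
    using c by (simp add: continuous_on_eq_continuous_at)
  from isCont_tendsto_compose[OF this tendsto_Pair[OF assms]] show ?thesis by simp
qed

lemma tvs_tendsto_scale:
  fixes g :: "'b \<Rightarrow> 'y"
  assumes "(f \<longlongrightarrow> a) F" "(g \<longlongrightarrow> b) F"
  shows "((\<lambda>x. f x *\<^sub>R g x) \<longlongrightarrow> a *\<^sub>R b) F"
proof -
  have c: "continuous_on UNIV (\<lambda>(a::real, x::'y). a *\<^sub>R x)"
    using tvs unfolding topological_vector_space_type_def by blast
  have "isCont (\<lambda>(a::real, x::'y). a *\<^sub>R x) (a, b)"
    using c by (simp add: continuous_on_eq_continuous_at)
  from isCont_tendsto_compose[OF this tendsto_Pair[OF assms]] show ?thesis by simp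
qed

lemma tvs_tendsto_diff:
  fixes f g :: "'b \<Rightarrow> 'y"
  assumes "(f \<longlongrightarrow> a) F" "(g \<longlongrightarrow> b) F"
  shows "((\<lambda>x. f x - g x) \<longlongrightarrow> a - b) F"
proof -
  have "((\<lambda>x. (-1::real) *\<^sub>R g x) \<longlongrightarrow> (-1) *\<^sub>R b) F"
    by (rule tvs_tendsto_scale[OF tendsto_const assms(2)])
  from tvs_tendsto_add[OF assms(1) this] show ?thesis by simp
qed

lemma tvs_cont_add: "continuous_on UNIV (\<lambda>v::'y. v + c)"
  unfolding continuous_on_def
  by (auto intro!: tvs_tendsto_add tendsto_ident_at)

lemma tvs_cont_diff: "continuous_on UNIV (\<lambda>v::'y. v - c)"
  unfolding continuous_on_def
  by (auto intro!: tvs_tendsto_diff tendsto_ident_at)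

lemma tvs_cont_rdiff: "continuous_on UNIV (\<lambda>v::'y. c - v)"
  unfolding continuous_on_def
  by (auto intro!: tvs_tendsto_diff tendsto_ident_at)

lemma tvs_eventually_small:
  fixes f :: "'b \<Rightarrow> 'y"
  assumes "(f \<longlongrightarrow> a) F" "open W" "0 \<in> W"
  shows "eventually (\<lambda>x. f x - a \<in> W) F"
proof -
  have "((\<lambda>x. f x - a) \<longlongrightarrow> a - a) F" by (rule tvs_tendsto_diff[OF assms(1) tendsto_const])
  then show ?thesis using assms(2,3) by (simp add: tendsto_def)
qed

lemma fst_tendsto_at: "(fst \<longlongrightarrow> a) (at (a,b) within S)"
  using tendsto_fst[OF tendsto_ident_at[of "(a,b)" S]] by simp
lemma snd_tendsto_at: "(snd \<longlongrightarrow> b) (at (a,b) within S)"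
  using tendsto_snd[OF tendsto_ident_at[of "(a,b)" S]] by simp

lemma tvs_nbhd_half:
  assumes "open (A::'y set)" "0 \<in> A"
  shows "\<exists>B. open B \<and> 0 \<in> B \<and> B \<subseteq> A \<and> (\<forall>u\<in>B. \<forall>v\<in>B. u + v \<in> A \<and> u - v \<in> A)"
proof -
  have c1: "continuous_on UNIV (\<lambda>p::'y\<times>'y. fst p + snd p)"
    unfolding continuous_on_def
    by (auto intro!: tvs_tendsto_add fst_tendsto_at snd_tendsto_at)
  have c2: "continuous_on UNIV (\<lambda>p::'y\<times>'y. fst p - snd p)"
    unfolding continuous_on_def
    by (auto intro!: tvs_tendsto_diff fst_tendsto_at snd_tendsto_at)
  have o1: "open ((\<lambda>p::'y\<times>'y. fst p + snd p) -` A)"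
    using c1 assms(1) by (metis continuous_on_open_vimage open_UNIV Int_UNIV_right)
  have o2: "open ((\<lambda>p::'y\<times>'y. fst p - snd p) -` A)"
    using c2 assms(1) by (metis continuous_on_open_vimage open_UNIV Int_UNIV_right)
  have "open ((\<lambda>p::'y\<times>'y. fst p + snd p) -` A \<inter> (\<lambda>p::'y\<times>'y. fst p - snd p) -` A)"
    using o1 o2 by blast
  moreover have "(0,0) \<in> (\<lambda>p::'y\<times>'y. fst p + snd p) -` A \<inter> (\<lambda>p::'y\<times>'y. fst p - snd p) -` A"
    using assms(2) by simp
  ultimately obtain A1 B1 where ab: "open A1" "open B1" "(0,0) \<in> A1 \<times> B1"
    "A1 \<times> B1 \<subseteq> (\<lambda>p::'y\<times>'y. fst p + snd p) -` A \<inter> (\<lambda>p::'y\<times>'y. fst p - snd p) -` A"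
    by (rule open_prod_elim)
  show ?thesis
    apply (rule exI[of _ "A1 \<inter> B1 \<inter> A"])
    using ab assms by auto
qed

end

lemma Lie_set_carrier:
  assumes "topological_group G TG" "X \<in> Lie_set G TG"
  shows "X t \<in> carrier G"
  using assms unfolding topological_group_def Lie_set_def continuous_map_def by auto

lemma Lie_set_zero:
  assumes "topological_group G TG" "X \<in> Lie_set G TG"
  shows "X 0 = \<one>\<^bsub>G\<^esub>"
proof -
  interpret group G using assms(1) unfolding topological_group_def by blast
  have c: "X 0 \<in> carrier G" using Lie_set_carrier[OF assms] .
  have "X 0 = X 0 \<otimes>\<^bsub>G\<^esub> X 0" using assms(2) unfolding Lie_set_def
    by (metis (mono_tags, lifting) add_0 mem_Collect_eq)
  then show ?thesis using c by (metis l_cancel_one' )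
qed

lemma Lie_set_cont:
  assumes "X \<in> Lie_set G TG"
  shows "continuous_map euclideanreal TG X"
  using assms unfolding Lie_set_def by blast

lemma tg_mult_cont:
  assumes "topological_group G TG" "continuous_map T TG f" "continuous_map T TG g"
  shows "continuous_map T TG (\<lambda>x. f x \<otimes>\<^bsub>G\<^esub> g x)"
proof -
  have m: "continuous_map (prod_topology TG TG) TG (\<lambda>(g, h). g \<otimes>\<^bsub>G\<^esub> h)"
    using assms(1) unfolding topological_group_def by blast
  from continuous_map_compose[OF continuous_map_pairedI[OF assms(2,3)] m]
  show ?thesis by (simp add: o_def)
qed

lemma tg_pow_cont:
  assumes "topological_group G TG" "continuous_map T TG f"
  shows "continuous_map T TG (\<lambda>x. f x [^]\<^bsub>G\<^esub> (k::nat))"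
proof (induction k)
  case 0
  have "\<one>\<^bsub>G\<^esub> \<in> topspace TG" using assms(1) unfolding topological_group_def
    by (simp add: group.is_monoid monoid.one_closed)
  then show ?case by simp
next
  case (Suc k)
  then show ?case using tg_mult_cont[OF assms(1) Suc assms(2)] by simp
qed

lemma rep_orbit_cont:
  assumes "continuous_representation G TG \<pi>"
  shows "continuous_map TG euclidean (\<lambda>g. \<pi> g u)"
proof -
  have m: "continuous_map (prod_topology TG euclidean) euclidean (\<lambda>(g, y). \<pi> g y)"
    using assms unfolding continuous_representation_def by blast
  have "continuous_map TG (prod_topology TG euclidean) (\<lambda>g. (g, u))"
    by (intro continuous_map_pairedI) auto
  from continuous_map_compose[OF this m] show ?thesis by (simp add: o_def)
qed


lemma dpi_eq:
  assumes "y \<in> gen_domain \<pi> X"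
  shows "(diff_quot \<pi> X y \<longlongrightarrow> dpi \<pi> X y) (at 0)"
proof -
  obtain v where v: "(diff_quot \<pi> X y \<longlongrightarrow> v) (at 0)" using assms unfolding gen_domain_def by blast
  have "dpi \<pi> X y = v" unfolding dpi_def by (rule tendsto_Lim[OF _ v]) simp
  then show ?thesis using v by simp
qed

lemma equi_apply:
  assumes "equicontinuous_family (\<pi> ` V)" "open W" "0 \<in> W"
  shows "\<exists>U. open U \<and> 0 \<in> U \<and> (\<forall>g\<in>V. \<forall>u\<in>U. \<pi> g u \<in> W)"
proof -
  obtain U where "open U" "0 \<in> U" "\<forall>A\<in>\<pi> ` V. A ` U \<subseteq> W"
    using assms unfolding equicontinuous_family_def by meson
  then show ?thesis by (intro exI[of _ U]) auto
qed
lemma open_real_ball: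
  assumes "open (S::real set)" "0 \<in> S"
  shows "\<exists>d>0. \<forall>s. \<bar>s\<bar> < d \<longrightarrow> s \<in> S"
proof -
  obtain d where "d > 0" "ball 0 d \<subseteq> S" using assms open_contains_ball by blast
  then show ?thesis by (intro exI[of _ d]) (auto simp: dist_real_def)
qed

lemma real_preimage_open:
  assumes "continuous_map euclideanreal T f" "openin T P"
  shows "open {s. f s \<in> P}"
  using openin_continuous_map_preimage[OF assms] by simp

lemma orbit_open:
  assumes tvs: "topological_vector_space_type TYPE('y::{real_vector, t2_space})"
    and rep: "continuous_representation G TG (\<pi>::'g \<Rightarrow> 'y \<Rightarrow> 'y)" and "open A"
  shows "openin TG {g \<in> topspace TG. \<pi> g u - u \<in> A}"
proof -
  have "continuous_map TG euclidean ((\<lambda>v. v - u) \<circ> (\<lambda>g. \<pi> g u))"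
    by (rule continuous_map_compose[OF rep_orbit_cont[OF rep]]) (simp add: tvs_cont_diff[OF tvs])
  from openin_continuous_map_preimage[OF this, of A] assms(3) show ?thesis by (simp add: o_def)
qed

lemma dpi_additive:
  fixes G :: "('g, 'm) monoid_scheme" and TG :: "'g topology"
    and \<pi> :: "'g \<Rightarrow> 'y::{real_vector, t2_space} \<Rightarrow> 'y"
  assumes tg: "topological_group G TG"
    and tvs: "topological_vector_space_type TYPE('y)"
    and lc: "locally_convex_type TYPE('y)"
    and rep: "continuous_representation G TG \<pi>"
    and V: "openin TG V" "\<one>\<^bsub>G\<^esub> \<in> V" "equicontinuous_family (\<pi> ` V)"
    and y: "y \<in> D1 G TG \<pi>"
    and XL: "X \<in> Lie_set G TG" "X1 \<in> Lie_set G TG" "X2 \<in> Lie_set G TG"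
    and sum: "Lie_sum G TG X X1 X2"
  shows "dpi \<pi> X y = dpi \<pi> X1 y + dpi \<pi> X2 y"
proof -
  interpret group G using tg unfolding topological_group_def by blast
  have topG: "topspace TG = carrier G" using tg unfolding topological_group_def by blast
  have lin: "\<And>g. g \<in> carrier G \<Longrightarrow> linear (\<pi> g)" and contg: "\<And>g. g \<in> carrier G \<Longrightarrow> continuous_on UNIV (\<pi> g)"
    and pi1: "\<pi> \<one>\<^bsub>G\<^esub> = id"
    and hom: "\<And>g h. g \<in> carrier G \<Longrightarrow> h \<in> carrier G \<Longrightarrow> \<pi> (g \<otimes>\<^bsub>G\<^esub> h) = \<pi> g \<circ> \<pi> h"
    and joint: "continuous_map (prod_topology TG euclidean) euclidean (\<lambda>(g, y). \<pi> g y)"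
    using rep unfolding continuous_representation_def by blast+
  have Vc: "V \<subseteq> carrier G" using V(1) topG openin_subset by metis
  define a where "a = dpi \<pi> X1 y"
  define b where "b = dpi \<pi> X2 y"
  define c where "c = dpi \<pi> X y"
  define w where "w = a + b"
  define Z where "Z r = X1 r \<otimes>\<^bsub>G\<^esub> X2 r" for r
  have yd: "y \<in> gen_domain \<pi> X" "y \<in> gen_domain \<pi> X1" "y \<in> gen_domain \<pi> X2"
    using y XL unfolding D1_def by auto
  have ta: "(diff_quot \<pi> X1 y \<longlongrightarrow> a) (at 0)" unfolding a_def by (rule dpi_eq[OF yd(2)])
  have tb: "(diff_quot \<pi> X2 y \<longlongrightarrow> b) (at 0)" unfolding b_def by (rule dpi_eq[OF yd(3)])
  have tc: "(diff_quot \<pi> X y \<longlongrightarrow> c) (at 0)" unfolding c_def by (rule dpi_eq[OF yd(1)])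
  have Zc: "\<And>r. Z r \<in> carrier G" unfolding Z_def using Lie_set_carrier[OF tg] XL by blast
  have Xc: "\<And>r. X r \<in> carrier G" using Lie_set_carrier[OF tg] XL by blast
  have X1c: "\<And>r. X1 r \<in> carrier G" using Lie_set_carrier[OF tg] XL by blast
  have X2c: "\<And>r. X2 r \<in> carrier G" using Lie_set_carrier[OF tg] XL by blast
  have Zcont: "continuous_map euclideanreal TG Z"
    unfolding Z_def[abs_def] by (rule tg_mult_cont[OF tg Lie_set_cont[OF XL(2)] Lie_set_cont[OF XL(3)]])
  have Z0: "Z 0 = \<one>\<^bsub>G\<^esub>" unfolding Z_def using Lie_set_zero[OF tg XL(2)] Lie_set_zero[OF tg XL(3)] by simp
  have tZ: "((\<lambda>s. inverse s *\<^sub>R (\<pi> (Z s) y - y)) \<longlongrightarrow> w) (at 0)"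
  proof -
    have e: "inverse s *\<^sub>R (\<pi> (Z s) y - y) = \<pi> (X1 s) (diff_quot \<pi> X2 y s) + diff_quot \<pi> X1 y s" for s
    proof -
      have l: "linear (\<pi> (X1 s))" using lin X1c by blast
      have "\<pi> (Z s) y = \<pi> (X1 s) (\<pi> (X2 s) y)" unfolding Z_def using hom X1c X2c by simp
      then show ?thesis unfolding diff_quot_def
        using linear_scale[OF l] linear_diff[OF l] by (simp add: scaleR_right_diff_distrib)
    qed
    have l1: "limitin TG X1 (X1 0) (at 0)"
      using continuous_map_limit[OF Lie_set_cont[OF XL(2)], of "\<lambda>s. s" 0 "at (0::real)"]
      by (simp add: o_def tendsto_ident_at)
    have l2: "limitin (prod_topology TG euclidean) (\<lambda>s. (X1 s, diff_quot \<pi> X2 y s)) (X1 0, b) (at 0)"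
      unfolding limitin_pairwise using l1 tb by (simp add: o_def)
    have l3: "((\<lambda>s. \<pi> (X1 s) (diff_quot \<pi> X2 y s)) \<longlongrightarrow> b) (at 0)"
      using continuous_map_limit[OF joint l2] Lie_set_zero[OF tg XL(2)] pi1 by (simp add: o_def)
    have "((\<lambda>s. \<pi> (X1 s) (diff_quot \<pi> X2 y s) + diff_quot \<pi> X1 y s) \<longlongrightarrow> b + a) (at 0)"
      by (rule tvs_tendsto_add[OF tvs l3 ta])
    then show ?thesis unfolding e w_def by (simp add: add.commute)
  qed
  have main: "c - w \<in> W0" if W0: "open W0" "0 \<in> W0" for W0
  proof -
    obtain B1 where B1: "open B1" "0 \<in> B1" "B1 \<subseteq> W0" "\<forall>u\<in>B1. \<forall>v\<in>B1. u + v \<in> W0 \<and> u - v \<in> W0"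
      using tvs_nbhd_half[OF tvs W0] by blast
    obtain B2 where B2: "open B2" "0 \<in> B2" "B2 \<subseteq> B1" "\<forall>u\<in>B2. \<forall>v\<in>B2. u + v \<in> B1 \<and> u - v \<in> B1"
      using tvs_nbhd_half[OF tvs B1(1,2)] by blast
    obtain W where W: "open W" "convex W" "0 \<in> W" "W \<subseteq> B2"
      using lc B2(1,2) unfolding locally_convex_type_def by meson
    obtain W1 where W1: "open W1" "0 \<in> W1" "W1 \<subseteq> W" "\<forall>u\<in>W1. \<forall>v\<in>W1. u + v \<in> W \<and> u - v \<in> W"
      using tvs_nbhd_half[OF tvs W(1,3)] by blast
    obtain W2 where W2: "open W2" "0 \<in> W2" "W2 \<subseteq> W1" "\<forall>u\<in>W2. \<forall>v\<in>W2. u + v \<in> W1 \<and> u - v \<in> W1"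
      using tvs_nbhd_half[OF tvs W1(1,2)] by blast
    obtain U1 where U1: "open U1" "0 \<in> U1" "\<forall>g\<in>V. \<forall>u\<in>U1. \<pi> g u \<in> W1"
      using equi_apply[OF V(3) W1(1,2)] by blast
    obtain U2 where U2: "open U2" "0 \<in> U2" "\<forall>g\<in>V. \<forall>u\<in>U2. \<pi> g u \<in> U1"
      using equi_apply[OF V(3) U1(1,2)] by blast
    obtain U3 where U3: "open U3" "0 \<in> U3" "\<forall>g\<in>V. \<forall>u\<in>U3. \<pi> g u \<in> W2"
      using equi_apply[OF V(3) W2(1,2)] by blast
    have U21: "U2 \<subseteq> U1" using U2(3) V(2) pi1 by auto
    define Nw where "Nw = {g \<in> topspace TG. \<pi> g w - w \<in> W1}"
    define N' where "N' = {g \<in> topspace TG. \<pi> g w - w \<in> U3}"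
    define N2 where "N2 = {g \<in> topspace TG. \<pi> g w - w \<in> W2}"
    have oNw: "openin TG Nw" unfolding Nw_def by (rule orbit_open[OF tvs rep W1(1)])
    have oN': "openin TG N'" unfolding N'_def by (rule orbit_open[OF tvs rep U3(1)])
    have oN2: "openin TG N2" unfolding N2_def by (rule orbit_open[OF tvs rep W2(1)])
    have one_top: "\<one>\<^bsub>G\<^esub> \<in> topspace TG" using topG by simp
    have "\<forall>\<^sub>F m in sequentially. \<forall>t\<in>{0..1}.
              inv\<^bsub>G\<^esub> (X t) \<otimes>\<^bsub>G\<^esub> ((X1 (t / real m) \<otimes>\<^bsub>G\<^esub> X2 (t / real m)) [^]\<^bsub>G\<^esub> m) \<in> V \<inter> N'"
      using sum unfolding Lie_sum_def
      apply (elim allE[of _ "{0..1::real}"] allE[of _ "V \<inter> N'"])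
      using V(1,2) oN' one_top U3(2) pi1 by (auto simp: N'_def)
    then obtain M0 where M0: "\<And>m. m \<ge> M0 \<Longrightarrow> \<forall>t\<in>{0..1}. inv\<^bsub>G\<^esub> (X t) \<otimes>\<^bsub>G\<^esub> (Z (t / real m) [^]\<^bsub>G\<^esub> m) \<in> V \<inter> N'"
      unfolding eventually_sequentially Z_def by blast
    define M where "M = Suc M0"
    have "\<exists>d>0. \<forall>s\<in>UNIV. s \<noteq> 0 \<and> dist s 0 < d \<longrightarrow> inverse s *\<^sub>R (\<pi> (Z s) y - y) - w \<in> U2"
      using tvs_eventually_small[OF tvs tZ U2(1,2)] by (simp only: eventually_at)
    then obtain d1 where d1: "d1 > 0" "\<And>s. s \<noteq> 0 \<Longrightarrow> \<bar>s\<bar> < d1 \<Longrightarrow> inverse s *\<^sub>R (\<pi> (Z s) y - y) - w \<in> U2"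
      by (metis UNIV_I dist_real_def diff_zero)
    obtain d2 where d2: "d2 > 0" "\<And>s. \<bar>s\<bar> < d2 \<Longrightarrow> X s \<in> V \<inter> N2"
    proof -
      have "open {s. X s \<in> V \<inter> N2}" using real_preimage_open[OF Lie_set_cont[OF XL(1)]] V(1) oN2 by blast
      moreover have "0 \<in> {s. X s \<in> V \<inter> N2}" using Lie_set_zero[OF tg XL(1)] V(2) one_top W2(2) pi1
        by (simp add: N2_def)
      ultimately obtain d where "d > 0" "\<forall>s. \<bar>s\<bar> < d \<longrightarrow> s \<in> {s. X s \<in> V \<inter> N2}"
        using open_real_ball by meson
      then show ?thesis using that by simp
    qed
    obtain d3 where d3: "d3 > 0" "\<And>s k. \<bar>s\<bar> < d3 \<Longrightarrow> k < M \<Longrightarrow> Z s [^]\<^bsub>G\<^esub> k \<in> V \<inter> Nw"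
    proof -
      have "open (\<Inter>k\<in>{..<M}. {s. Z s [^]\<^bsub>G\<^esub> k \<in> V \<inter> Nw})"
        using real_preimage_open[OF tg_pow_cont[OF tg Zcont]] V(1) oNw by blast
      moreover have "0 \<in> (\<Inter>k\<in>{..<M}. {s. Z s [^]\<^bsub>G\<^esub> k \<in> V \<inter> Nw})"
        using Z0 V(2) one_top W1(2) pi1 by (simp add: Nw_def)
      ultimately obtain d where "d > 0" "\<forall>s. \<bar>s\<bar> < d \<longrightarrow> s \<in> (\<Inter>k\<in>{..<M}. {s. Z s [^]\<^bsub>G\<^esub> k \<in> V \<inter> Nw})"
        using open_real_ball by meson
      then show ?thesis using that by simp
    qed
    have "\<exists>d>0. \<forall>s\<in>UNIV. s \<noteq> 0 \<and> dist s 0 < d \<longrightarrow> diff_quot \<pi> X y s - c \<in> W"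
      using tvs_eventually_small[OF tvs tc W(1,3)] by (simp only: eventually_at)
    then obtain bt where bt: "bt > 0" "\<And>t. 0 < t \<Longrightarrow> t < bt \<Longrightarrow> diff_quot \<pi> X y t - c \<in> W"
      by (metis UNIV_I dist_real_def diff_zero abs_of_pos less_irrefl)
    define t where "t = Min {d1, d2, d3, bt, 1} / 2"
    have t: "0 < t" "t < d1" "t < d2" "t < d3" "t < bt" "t < 1"
      unfolding t_def using d1(1) d2(1) d3(1) bt(1) by auto
    define e where "e = diff_quot \<pi> X y t - w"
    define A where "A n = inverse t *\<^sub>R (\<pi> (Z (t / real n) [^]\<^bsub>G\<^esub> n) y - y) - w" for n
    have AW: "A n \<in> W" if n1: "n \<ge> 1" for n
    proof -
      define r where "r = t / real n"
      have r: "0 < r" "r \<le> t" using t n1 unfolding r_def by (auto simp: divide_le_eq)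
      define v where "v = inverse r *\<^sub>R (\<pi> (Z r) y - y)"
      have vw: "v - w \<in> U2" unfolding v_def using d1(2)[of r] r t by auto
      define p where "p k = \<pi> (Z r [^]\<^bsub>G\<^esub> (k::nat))" for k
      have pk_lin: "linear (p k)" for k :: nat unfolding p_def by (intro lin nat_pow_closed Zc)
      have tele: "\<pi> (Z r [^]\<^bsub>G\<^esub> m) y - y = (\<Sum>k<m. p k (\<pi> (Z r) y - y))" for m :: nat
      proof (induction m)
        case 0
        show ?case using pi1 by (simp add: p_def)
      next
        case (Suc m)
        have "\<pi> (Z r [^]\<^bsub>G\<^esub> Suc m) y = p m (\<pi> (Z r) y)"
          using hom[of "Z r [^]\<^bsub>G\<^esub> m" "Z r"] Zc by (simp add: p_def)
        moreover have "p m (\<pi> (Z r) y) - y = p m (\<pi> (Z r) y - y) + (p m y - y)"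
          using linear_diff[OF pk_lin[of m]] by simp
        ultimately show ?case using Suc.IH by (simp add: p_def)
      qed
      have zr: "\<pi> (Z r) y - y = r *\<^sub>R v" unfolding v_def using r by simp
      have An: "A n = (\<Sum>k<n. (1 / real n) *\<^sub>R (p k v - w))"
      proof -
        have "A n = inverse t *\<^sub>R (\<Sum>k<n. p k (r *\<^sub>R v)) - w"
          unfolding A_def r_def[symmetric] tele zr ..
        also have "\<dots> = inverse t *\<^sub>R (r *\<^sub>R (\<Sum>k<n. p k v)) - w"
          using linear_scale[OF pk_lin] by (simp add: scaleR_sum_right)
        also have "\<dots> = (1 / real n) *\<^sub>R (\<Sum>k<n. p k v) - w"
          using t(1) unfolding r_def by simp
        also have "\<dots> = (\<Sum>k<n. (1 / real n) *\<^sub>R (p k v - w))"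
          using n1 by (simp add: scaleR_diff_right sum_subtractf scaleR_sum_right sum_constant_scaleR)
        finally show ?thesis .
      qed
      have pkW: "p k v - w \<in> W" if kn: "k < n" for k
      proof -
        have split: "p k v - w = p k (v - w) + (p k w - w)"
          using linear_diff[OF pk_lin[of k]] by simp
        show ?thesis
        proof (cases "k < M")
          case True
          have g: "Z r [^]\<^bsub>G\<^esub> k \<in> V \<inter> Nw" using d3(2)[OF _ True] r t by auto
          have 1: "p k (v - w) \<in> W1" using U1(3) g U21 vw unfolding p_def by blast
          have 2: "p k w - w \<in> W1" using g unfolding p_def Nw_def by blast
          from 1 2 split W1(4) show ?thesis by metis
        next
          case False
          define s where "s = real k * t / real n"
          have kpos: "k > 0" using False unfolding M_def by simp
          have s: "0 \<le> s" "s \<le> t" unfolding s_def using t(1) kn n1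
            by (auto simp: divide_le_eq)
          have s01: "s \<in> {0..1}" using s t by auto
          have sk: "s / real k = r" unfolding s_def r_def using kpos by simp
          define h where "h = inv\<^bsub>G\<^esub> (X s) \<otimes>\<^bsub>G\<^esub> (Z (s / real k) [^]\<^bsub>G\<^esub> k)"
          have hV: "h \<in> V \<inter> N'" using M0[of k] False s01 unfolding M_def h_def by auto
          have hc: "h \<in> carrier G" unfolding h_def using Xc Zc by simp
          have zc: "Z r [^]\<^bsub>G\<^esub> k \<in> carrier G" by (intro nat_pow_closed Zc)
          have decomp: "Z r [^]\<^bsub>G\<^esub> k = X s \<otimes>\<^bsub>G\<^esub> h"
            unfolding h_def sk using Xc[of s] zc by (metis m_assoc inv_closed r_inv l_one)
          have pk: "p k = \<pi> (X s) \<circ> \<pi> h" unfolding p_def decomp using hom Xc hc by blast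
          have Xs: "X s \<in> V \<inter> N2" using d2(2) s t by auto
          have "\<pi> h (v - w) \<in> U1" using U2(3) hV vw by blast
          then have 1: "p k (v - w) \<in> W1" using U1(3) Xs pk by auto
          have "\<pi> h w - w \<in> U3" using hV unfolding N'_def by blast
          then have a1: "\<pi> (X s) (\<pi> h w - w) \<in> W2" using U3(3) Xs by blast
          have a2: "\<pi> (X s) w - w \<in> W2" using Xs unfolding N2_def by blast
          have "p k w - w = \<pi> (X s) (\<pi> h w - w) + (\<pi> (X s) w - w)"
            using pk linear_diff[OF lin[OF Xc[of s]]] by simp
          then have 2: "p k w - w \<in> W1" using W2(4) a1 a2 by metis
          from 1 2 split W1(4) show ?thesis by metis
        qed
      qed
      have "(\<Sum>k\<in>{..<n}. (1 / real n) *\<^sub>R (p k v - w)) \<in> W"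
        by (rule convex_sum[OF _ W(2)]) (use n1 pkW in auto)
      then show ?thesis using An by simp
    qed
    have Alim: "(A \<longlongrightarrow> e) sequentially"
    proof -
      have Xt: "X t \<in> carrier G" using Xc .
      define h where "h n = inv\<^bsub>G\<^esub> (X t) \<otimes>\<^bsub>G\<^esub> (Z (t / real n) [^]\<^bsub>G\<^esub> n)" for n
      have hl: "limitin TG h \<one>\<^bsub>G\<^esub> sequentially"
        unfolding limitin_def
      proof (intro conjI allI impI)
        show "\<one>\<^bsub>G\<^esub> \<in> topspace TG" using one_top .
        fix U assume U: "openin TG U \<and> \<one>\<^bsub>G\<^esub> \<in> U"
        have "\<forall>\<^sub>F m in sequentially. \<forall>t'\<in>{0..1}.
              inv\<^bsub>G\<^esub> (X t') \<otimes>\<^bsub>G\<^esub> ((X1 (t' / real m) \<otimes>\<^bsub>G\<^esub> X2 (t' / real m)) [^]\<^bsub>G\<^esub> m) \<in> U"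
          using sum U unfolding Lie_sum_def by blast
        then show "\<forall>\<^sub>F n in sequentially. h n \<in> U"
          by (rule eventually_mono) (use t in \<open>auto simp: h_def Z_def\<close>)
      qed
      have l1: "((\<lambda>n. \<pi> (h n) y) \<longlongrightarrow> y) sequentially"
        using continuous_map_limit[OF rep_orbit_cont[OF rep, of y] hl] pi1 by (simp add: o_def)
      have ct: "isCont (\<pi> (X t)) y" using contg[OF Xt] continuous_on_eq_continuous_at open_UNIV by blast
      have l2: "((\<lambda>n. \<pi> (X t) (\<pi> (h n) y)) \<longlongrightarrow> \<pi> (X t) y) sequentially"
        using isCont_tendsto_compose[OF ct l1] .
      have eq: "\<pi> (Z (t / real n) [^]\<^bsub>G\<^esub> n) y = \<pi> (X t) (\<pi> (h n) y)" for n
      proof -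
        have zc: "Z (t / real n) [^]\<^bsub>G\<^esub> n \<in> carrier G" by (intro nat_pow_closed Zc)
        have hc: "h n \<in> carrier G" unfolding h_def using Xt zc by simp
        have "Z (t / real n) [^]\<^bsub>G\<^esub> n = X t \<otimes>\<^bsub>G\<^esub> h n"
          unfolding h_def using Xt zc by (metis m_assoc inv_closed r_inv l_one)
        then show ?thesis using hom[OF Xt hc] by simp
      qed
      have "((\<lambda>n. inverse t *\<^sub>R (\<pi> (X t) (\<pi> (h n) y) - y) - w) \<longlongrightarrow> inverse t *\<^sub>R (\<pi> (X t) y - y) - w) sequentially"
        by (intro tvs_tendsto_diff[OF tvs] tvs_tendsto_scale[OF tvs] tendsto_const l2)
      then show ?thesis unfolding A_def eq e_def diff_quot_def .
    qed
    obtain n where n: "n \<ge> 1" "A n - e \<in> W"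
      using eventually_conj[OF tvs_eventually_small[OF tvs Alim W(1,3)] eventually_ge_at_top[of 1]]
      unfolding eventually_sequentially by auto
    have "A n - (A n - e) \<in> B1" using B2(4) AW[OF n(1)] n(2) W(4) by blast
    moreover have "diff_quot \<pi> X y t - c \<in> B1" using bt(2) t W(4) B2(3) by blast
    ultimately have "(A n - (A n - e)) - (diff_quot \<pi> X y t - c) \<in> W0" using B1(4) by blast
    then show ?thesis unfolding e_def by simp
  qed
  have "c = w"
  proof (rule ccontr)
    assume "c \<noteq> w"
    then have "c - w \<noteq> 0" by simp
    then obtain U where "open U" "0 \<in> U" "c - w \<notin> U" using t1_space[of 0 "c - w"] by metis
    then show False using main by blast
  qed
  then show ?thesis unfolding c_def w_def a_def b_def .
qed



lemma tvs_cont_sub2: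
  assumes tvs: "topological_vector_space_type TYPE('y::{real_vector, t2_space})"
  shows "continuous_on UNIV (\<lambda>p::'y\<times>'y. fst p - snd p)"
  unfolding continuous_on_def
  by (auto intro!: tvs_tendsto_diff[OF tvs] fst_tendsto_at[OF tvs] snd_tendsto_at[OF tvs])

lemma Lie_sum_limit:
  assumes tg: "topological_group G TG" and s: "Lie_sum G TG X X1 X2"
  shows "limitin TG (\<lambda>n. inv\<^bsub>G\<^esub> (X t) \<otimes>\<^bsub>G\<^esub> ((X1 (t / real n) \<otimes>\<^bsub>G\<^esub> X2 (t / real n)) [^]\<^bsub>G\<^esub> n)) \<one>\<^bsub>G\<^esub> sequentially"
  unfolding limitin_def
proof (intro conjI allI impI)
  show "\<one>\<^bsub>G\<^esub> \<in> topspace TG" using tg unfolding topological_group_def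
    by (simp add: group.is_monoid monoid.one_closed)
  fix U assume U: "openin TG U \<and> \<one>\<^bsub>G\<^esub> \<in> U"
  have "\<forall>\<^sub>F m in sequentially. \<forall>t'\<in>{t}.
        inv\<^bsub>G\<^esub> (X t') \<otimes>\<^bsub>G\<^esub> ((X1 (t' / real m) \<otimes>\<^bsub>G\<^esub> X2 (t' / real m)) [^]\<^bsub>G\<^esub> m) \<in> U"
  proof -
    have "compact {t} \<longrightarrow> (\<forall>U. openin TG U \<and> \<one>\<^bsub>G\<^esub> \<in> U \<longrightarrow>
           (\<forall>\<^sub>F n in sequentially. \<forall>t'\<in>{t}.
              inv\<^bsub>G\<^esub> (X t') \<otimes>\<^bsub>G\<^esub> ((X1 (t' / real n) \<otimes>\<^bsub>G\<^esub> X2 (t' / real n)) [^]\<^bsub>G\<^esub> n) \<in> U))"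
      using s unfolding Lie_sum_def by (rule spec)
    then show ?thesis using U by simp
  qed
  then show "\<forall>\<^sub>F n in sequentially. inv\<^bsub>G\<^esub> (X t) \<otimes>\<^bsub>G\<^esub> ((X1 (t / real n) \<otimes>\<^bsub>G\<^esub> X2 (t / real n)) [^]\<^bsub>G\<^esub> n) \<in> U"
    by simp
qed

lemma Lie_sum_unique:
  assumes tg: "topological_group G TG" and L: "X \<in> Lie_set G TG" "X' \<in> Lie_set G TG"
    and X1: "X1 \<in> Lie_set G TG" and X2: "X2 \<in> Lie_set G TG"
    and s: "Lie_sum G TG X X1 X2" "Lie_sum G TG X' X1 X2"
  shows "X = X'"
proof
  fix t
  interpret group G using tg unfolding topological_group_def by blast
  have topG: "topspace TG = carrier G" and H: "Hausdorff_space TG"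
    and inv: "continuous_map TG TG (\<lambda>g. inv\<^bsub>G\<^esub> g)"
    using tg unfolding topological_group_def by blast+
  define z where "z n = (X1 (t / real n) \<otimes>\<^bsub>G\<^esub> X2 (t / real n)) [^]\<^bsub>G\<^esub> (n::nat)" for n
  have zc: "z n \<in> carrier G" for n unfolding z_def
    using Lie_set_carrier[OF tg X1] Lie_set_carrier[OF tg X2] by (intro nat_pow_closed m_closed)
  have a: "X t \<in> carrier G" "X' t \<in> carrier G" using Lie_set_carrier[OF tg] L by blast+
  have l1: "limitin TG (\<lambda>n. inv\<^bsub>G\<^esub> (X t) \<otimes>\<^bsub>G\<^esub> z n) \<one>\<^bsub>G\<^esub> sequentially"
    using Lie_sum_limit[OF tg s(1)] unfolding z_def .
  have l2: "limitin TG (\<lambda>n. inv\<^bsub>G\<^esub> (X' t) \<otimes>\<^bsub>G\<^esub> z n) \<one>\<^bsub>G\<^esub> sequentially"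
    using Lie_sum_limit[OF tg s(2)] unfolding z_def .
  have cm: "continuous_map (prod_topology TG TG) TG (\<lambda>p. fst p \<otimes>\<^bsub>G\<^esub> inv\<^bsub>G\<^esub> (snd p))"
    by (rule tg_mult_cont[OF tg continuous_map_fst continuous_map_compose[OF continuous_map_snd inv, unfolded o_def]])
  have lp: "limitin (prod_topology TG TG) (\<lambda>n. (inv\<^bsub>G\<^esub> (X t) \<otimes>\<^bsub>G\<^esub> z n, inv\<^bsub>G\<^esub> (X' t) \<otimes>\<^bsub>G\<^esub> z n)) (\<one>\<^bsub>G\<^esub>, \<one>\<^bsub>G\<^esub>) sequentially"
    unfolding limitin_pairwise using l1 l2 by (simp add: o_def)
  have l3: "limitin TG (\<lambda>n. (inv\<^bsub>G\<^esub> (X t) \<otimes>\<^bsub>G\<^esub> z n) \<otimes>\<^bsub>G\<^esub> inv\<^bsub>G\<^esub> (inv\<^bsub>G\<^esub> (X' t) \<otimes>\<^bsub>G\<^esub> z n)) \<one>\<^bsub>G\<^esub> sequentially"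
    using continuous_map_limit[OF cm lp] by (simp add: o_def)
  have eq: "(inv\<^bsub>G\<^esub> (X t) \<otimes>\<^bsub>G\<^esub> z n) \<otimes>\<^bsub>G\<^esub> inv\<^bsub>G\<^esub> (inv\<^bsub>G\<^esub> (X' t) \<otimes>\<^bsub>G\<^esub> z n) = inv\<^bsub>G\<^esub> (X t) \<otimes>\<^bsub>G\<^esub> X' t" for n
  proof -
    have i: "inv\<^bsub>G\<^esub> (inv\<^bsub>G\<^esub> (X' t) \<otimes>\<^bsub>G\<^esub> z n) = inv\<^bsub>G\<^esub> (z n) \<otimes>\<^bsub>G\<^esub> X' t"
      using inv_mult_group[of "inv\<^bsub>G\<^esub> (X' t)" "z n"] a zc[of n] by simp
    have j: "z n \<otimes>\<^bsub>G\<^esub> (inv\<^bsub>G\<^esub> (z n) \<otimes>\<^bsub>G\<^esub> X' t) = X' t"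
      using a zc[of n] by (simp add: m_assoc[symmetric])
    show ?thesis unfolding i using a zc[of n] j by (simp add: m_assoc)
  qed
  have l4: "limitin TG (\<lambda>n. inv\<^bsub>G\<^esub> (X t) \<otimes>\<^bsub>G\<^esub> X' t) \<one>\<^bsub>G\<^esub> sequentially"
    using l3 unfolding eq .
  have l5: "limitin TG (\<lambda>n. inv\<^bsub>G\<^esub> (X t) \<otimes>\<^bsub>G\<^esub> X' t) (inv\<^bsub>G\<^esub> (X t) \<otimes>\<^bsub>G\<^esub> X' t) sequentially"
    using a topG by simp
  have "inv\<^bsub>G\<^esub> (X t) \<otimes>\<^bsub>G\<^esub> X' t = \<one>\<^bsub>G\<^esub>"
    using limitin_Hausdorff_unique[OF l5 l4 _ H] by simp
  then have "inv\<^bsub>G\<^esub> (X' t) = inv\<^bsub>G\<^esub> (X t)" using a by (intro inv_equality) auto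
  then show "X t = X' t" using a by (metis inv_inv)
qed

lemma Lie_add_prop:
  assumes tg: "topological_group G TG" and X1: "X1 \<in> Lie_set G TG" and X2: "X2 \<in> Lie_set G TG"
    and ex: "\<exists>X\<in>Lie_set G TG. Lie_sum G TG X X1 X2"
  shows "Lie_add G TG X1 X2 \<in> Lie_set G TG \<and> Lie_sum G TG (Lie_add G TG X1 X2) X1 X2"
proof -
  have "\<exists>!X. X \<in> Lie_set G TG \<and> Lie_sum G TG X X1 X2"
    using ex Lie_sum_unique[OF tg _ _ X1 X2] by blast
  then show ?thesis unfolding Lie_add_def by (rule theI')
qed


lemma eval_cont:
  assumes tg: "topological_group G TG" and TL: "topspace TL = Lie_set G TG"
    and fin: "finer_than_compact_open G TG TL"
  shows "continuous_map TL TG (\<lambda>X. X q)"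
  unfolding continuous_map_def
proof (intro conjI allI impI)
  have topG: "topspace TG = carrier G" using tg unfolding topological_group_def by blast
  show "(\<lambda>X. X q) \<in> topspace TL \<rightarrow> topspace TG" using Lie_set_carrier[OF tg] TL topG by auto
  fix U assume U: "openin TG U"
  have "openin TL {X \<in> Lie_set G TG. X ` {q} \<subseteq> U}" using fin U unfolding finer_than_compact_open_def
    by (meson compact_sing)
  moreover have "{X \<in> Lie_set G TG. X ` {q} \<subseteq> U} = {x \<in> topspace TL. x q \<in> U}" using TL by auto
  ultimately show "openin TL {x \<in> topspace TL. x q \<in> U}" by simp
qed

lemma dq_cont:
  assumes tvs: "topological_vector_space_type TYPE('y::{real_vector, t2_space})"
    and tg: "topological_group G TG" and TL: "topspace TL = Lie_set G TG"
    and fin: "finer_than_compact_open G TG TL" and rep: "continuous_representation G TG (\<pi>::'g \<Rightarrow> 'y \<Rightarrow> 'y)"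
  shows "continuous_map TL euclidean (\<lambda>X. diff_quot \<pi> X y q)"
proof -
  have c1: "continuous_map TL euclidean ((\<lambda>g. \<pi> g y) \<circ> (\<lambda>X. X q))"
    by (rule continuous_map_compose[OF eval_cont[OF tg TL fin] rep_orbit_cont[OF rep]])
  have c2: "continuous_map euclidean euclidean (\<lambda>v::'y. inverse q *\<^sub>R (v - y))"
    unfolding continuous_map_iff_continuous2 continuous_on_def
    by (auto intro!: tvs_tendsto_scale[OF tvs] tvs_tendsto_diff[OF tvs] tendsto_ident_at)
  show ?thesis using continuous_map_compose[OF c1 c2] by (simp add: o_def diff_quot_def)
qed

lemma Baire_step:
  assumes B: "Baire_space TL" and ne: "topspace TL \<noteq> {}"
    and cl: "\<And>N::nat. closedin TL (F N)" and cov: "\<And>x. x \<in> topspace TL \<Longrightarrow> \<exists>N. x \<in> F N"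
  shows "\<exists>N. TL interior_of (F N) \<noteq> {}"
proof (rule ccontr)
  assume "\<not> ?thesis"
  then have e: "\<And>N. TL interior_of (F N) = {}" by blast
  define \<U> where "\<U> = range (\<lambda>N. topspace TL - F N)"
  have "countable \<U>" unfolding \<U>_def by simp
  moreover have "\<forall>U\<in>\<U>. openin TL U \<and> TL closure_of U = topspace TL"
    unfolding \<U>_def using cl e by (auto simp: closure_of_complement)
  ultimately have "TL closure_of (topspace TL \<inter> \<Inter>\<U>) = topspace TL"
    using B unfolding Baire_space_def by blast
  moreover have "topspace TL \<inter> \<Inter>\<U> = {}" unfolding \<U>_def using cov by blast
  ultimately show False using ne by simp
qed


lemma closure_sum:
  assumes tvs: "topological_vector_space_type TYPE('y::{real_vector, t2_space})"
    and B: "open (B::'y set)" and B0: "0 \<in> B" and x: "x \<in> closure B"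
  shows "\<exists>u\<in>B. \<exists>v\<in>B. x = u + v"
proof -
  have o: "open {q. x - q \<in> B}"
    using tvs_cont_rdiff[OF tvs, of x] B by (metis continuous_on_open_vimage open_UNIV Int_UNIV_right vimage_def)
  have "x \<in> {q. x - q \<in> B} \<inter> closure B" using x B0 by simp
  then have "{q. x - q \<in> B} \<inter> B \<noteq> {}" using open_Int_closure_eq_empty[OF o, of B] by blast
  then obtain q where "q \<in> B" "x - q \<in> B" by blast
  then show ?thesis by (intro bexI[of _ q] bexI[of _ "x - q"]) auto
qed

lemma dpi_cont:
  fixes G :: "('g, 'm) monoid_scheme" and TG :: "'g topology"
    and \<pi> :: "'g \<Rightarrow> 'y::{real_vector, t2_space} \<Rightarrow> 'y" and TL :: "(real \<Rightarrow> 'g) topology"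
  assumes tg: "topological_group G TG"
    and tvs: "topological_vector_space_type TYPE('y)"
    and lc: "locally_convex_type TYPE('y)"
    and rep: "continuous_representation G TG \<pi>"
    and V: "openin TG V" "\<one>\<^bsub>G\<^esub> \<in> V" "equicontinuous_family (\<pi> ` V)"
    and y: "y \<in> D1 G TG \<pi>"
    and TL: "topspace TL = Lie_set G TG" and Baire: "Baire_space TL"
    and fin: "finer_than_compact_open G TG TL"
    and ex: "\<forall>X1\<in>Lie_set G TG. \<forall>X2\<in>Lie_set G TG. \<exists>X\<in>Lie_set G TG. Lie_sum G TG X X1 X2"
    and LT: "Lie_tvs G TG TL"
  shows "continuous_map TL euclidean (\<lambda>X. dpi \<pi> X y)"
proof -
  interpret group G using tg unfolding topological_group_def by blast
  define L where "L = Lie_set G TG"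
  define add where "add = Lie_add G TG"
  define z where "z = (\<lambda>_::real. \<one>\<^bsub>G\<^esub>)"
  define neg where "neg X = Lie_smult (-1) X" for X :: "real \<Rightarrow> 'g"
  have addL: "\<And>X Y. X \<in> L \<Longrightarrow> Y \<in> L \<Longrightarrow> add X Y \<in> L"
    and negL: "\<And>X. X \<in> L \<Longrightarrow> neg X \<in> L"
    and assoc: "\<And>X Y Z. X \<in> L \<Longrightarrow> Y \<in> L \<Longrightarrow> Z \<in> L \<Longrightarrow> add (add X Y) Z = add X (add Y Z)"
    and comm: "\<And>X Y. X \<in> L \<Longrightarrow> Y \<in> L \<Longrightarrow> add X Y = add Y X"
    and zadd: "\<And>X. X \<in> L \<Longrightarrow> add z X = X"
    and addneg: "\<And>X. X \<in> L \<Longrightarrow> add X (neg X) = z"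
    and addc: "continuous_map (prod_topology TL TL) TL (\<lambda>(X, Y). add X Y)"
    using LT unfolding Lie_tvs_def Let_def L_def add_def z_def neg_def by blast+
  define f where "f X = dpi \<pi> X y" for X
  have topG: "topspace TG = carrier G" using tg unfolding topological_group_def by blast
  have zL: "z \<in> L"
    unfolding L_def Lie_set_def z_def using topG by simp
  have fadd: "f (add A B) = f A + f B" if "A \<in> L" "B \<in> L" for A B
  proof -
    have p: "add A B \<in> L \<and> Lie_sum G TG (add A B) A B"
      using Lie_add_prop[OF tg, of A B] that ex unfolding L_def add_def by blast
    show ?thesis unfolding f_def
      using dpi_additive[OF tg tvs lc rep V y, of "add A B" A B] p that unfolding L_def by blast
  qed
  have fz: "f z = 0" using fadd[OF zL zL] zadd[OF zL] by simp
  have fneg: "f (neg A) = - f A" if "A \<in> L" for A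
  proof -
    have "f A + f (neg A) = 0" using fadd[OF that negL[OF that]] addneg[OF that] fz by simp
    then show ?thesis by (rule minus_unique[symmetric])
  qed
  define fn where "fn n X = diff_quot \<pi> X y (inverse (real (Suc n)))" for n X
  have fnc: "continuous_map TL euclidean (fn n)" for n
    unfolding fn_def using dq_cont[OF tvs tg TL fin rep] by blast
  have fnlim: "((\<lambda>n. fn n X) \<longlongrightarrow> f X) sequentially" if "X \<in> L" for X
  proof -
    have yd: "y \<in> gen_domain \<pi> X" using y that unfolding D1_def L_def by blast
    have "filterlim (\<lambda>n. inverse (real (Suc n))) (at_right 0) sequentially"
      by (rule tendsto_imp_filterlim_at_right[OF LIMSEQ_inverse_real_of_nat]) simp
    then have "filterlim (\<lambda>n. inverse (real (Suc n))) (at 0) sequentially"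
      using filterlim_mono at_le by (metis order_refl top_greatest)
    from filterlim_compose[OF dpi_eq[OF yd] this] show ?thesis unfolding fn_def f_def .
  qed
  have diffc: "continuous_map TL euclidean (\<lambda>X. fn m X - fn k X)" for m k
  proof -
    have "continuous_map (prod_topology euclidean euclidean) euclidean (\<lambda>p::'y\<times>'y. fst p - snd p)"
      using tvs_cont_sub2[OF tvs] by simp
    from continuous_map_compose[OF continuous_map_pairedI[OF fnc[of m] fnc[of k]] this]
    show ?thesis by (simp add: o_def)
  qed
  have key: "\<exists>X0 N0. openin TL N0 \<and> X0 \<in> N0 \<and> (\<forall>X\<in>N0. f X - f X0 \<in> W0)"
    if W0: "open W0" "0 \<in> W0" for W0
  proof -
    obtain B1 where B1: "open B1" "0 \<in> B1" "B1 \<subseteq> W0" "\<forall>u\<in>B1. \<forall>v\<in>B1. u + v \<in> W0 \<and> u - v \<in> W0"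
      using tvs_nbhd_half[OF tvs W0] by blast
    obtain B2 where B2: "open B2" "0 \<in> B2" "B2 \<subseteq> B1" "\<forall>u\<in>B2. \<forall>v\<in>B2. u + v \<in> B1 \<and> u - v \<in> B1"
      using tvs_nbhd_half[OF tvs B1(1,2)] by blast
    obtain B3 where B3: "open B3" "0 \<in> B3" "B3 \<subseteq> B2" "\<forall>u\<in>B3. \<forall>v\<in>B3. u + v \<in> B2 \<and> u - v \<in> B2"
      using tvs_nbhd_half[OF tvs B2(1,2)] by blast
    obtain B4 where B4: "open B4" "0 \<in> B4" "B4 \<subseteq> B3" "\<forall>u\<in>B4. \<forall>v\<in>B4. u + v \<in> B3 \<and> u - v \<in> B3"
      using tvs_nbhd_half[OF tvs B3(1,2)] by blast
    define F where "F N = (\<Inter>m\<in>{N..}. {X \<in> topspace TL. fn m X - fn N X \<in> closure B3})" for N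
    have Fcl: "closedin TL (F N)" for N
      unfolding F_def
      by (intro closedin_INT) (auto intro!: closedin_continuous_map_preimage[OF diffc])
    have Fcov: "\<exists>N. X \<in> F N" if X: "X \<in> topspace TL" for X
    proof -
      have "eventually (\<lambda>m. fn m X - f X \<in> B4) sequentially"
        using tvs_eventually_small[OF tvs fnlim B4(1,2)] X TL L_def by blast
      then obtain N where N: "\<And>m. m \<ge> N \<Longrightarrow> fn m X - f X \<in> B4"
        unfolding eventually_sequentially by blast
      have "fn m X - fn N X \<in> closure B3" if "m \<ge> N" for m
      proof -
        have "(fn m X - f X) - (fn N X - f X) \<in> B3" using B4(4) N[OF that] N[of N] by blast
        then show ?thesis using closure_subset by fastforce
      qed
      then show ?thesis using X unfolding F_def by blast
    qed
    obtain N where N: "TL interior_of (F N) \<noteq> {}"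
      using Baire_step[OF Baire _ Fcl Fcov] zL TL L_def by blast
    define Oi where "Oi = TL interior_of (F N)"
    obtain X0 where X0: "X0 \<in> Oi" using N Oi_def by blast
    have OF: "Oi \<subseteq> F N" unfolding Oi_def by (rule interior_of_subset)
    have Otop: "Oi \<subseteq> topspace TL" using OF unfolding F_def by auto
    have near: "f X - fn N X \<in> closure B3" if "X \<in> Oi" for X
    proof (rule Lim_in_closed_set[where f="\<lambda>m. fn m X - fn N X" and F=sequentially])
      show "closed (closure B3)" by simp
      show "\<forall>\<^sub>F m in sequentially. fn m X - fn N X \<in> closure B3"
        using that OF unfolding eventually_sequentially F_def by blast
      show "sequentially \<noteq> bot" by simp
      show "((\<lambda>m. fn m X - fn N X) \<longlongrightarrow> f X - fn N X) sequentially"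
        using tvs_tendsto_diff[OF tvs fnlim tendsto_const] that Otop TL L_def by blast
    qed
    define N0 where "N0 = {X \<in> Oi. fn N X - fn N X0 \<in> B3}"
    have cN: "continuous_map TL euclidean (\<lambda>X. fn N X - fn N X0)"
      using continuous_map_compose[OF fnc[of N], of euclidean "\<lambda>v. v - fn N X0"] tvs_cont_diff[OF tvs]
      by (simp add: o_def)
    have oN0: "openin TL N0" unfolding N0_def
      by (rule openin_continuous_map_preimage_gen[OF cN _ ]) (simp_all add: Oi_def B3(1))
    show ?thesis
    proof (intro exI[of _ X0] exI[of _ N0] conjI ballI)
      show "openin TL N0" by (rule oN0)
      show "X0 \<in> N0" unfolding N0_def using X0 B3(2) by simp
      fix X assume X: "X \<in> N0"
      have XO: "X \<in> Oi" using X N0_def by blast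
      obtain u1 u2 where u: "u1 \<in> B3" "u2 \<in> B3" "f X - fn N X = u1 + u2"
        using closure_sum[OF tvs B3(1,2) near[OF XO]] by blast
      obtain u3 u4 where u': "u3 \<in> B3" "u4 \<in> B3" "f X0 - fn N X0 = u3 + u4"
        using closure_sum[OF tvs B3(1,2) near[OF X0]] by blast
      have p: "fn N X - fn N X0 \<in> B3" using X N0_def by blast
      have fX: "f X = u1 + u2 + fn N X" using u(3) by (simp add: diff_eq_eq)
      have fX0: "f X0 = u3 + u4 + fn N X0" using u'(3) by (simp add: diff_eq_eq)
      have e: "f X - f X0 = ((u1 + u2) + (fn N X - fn N X0)) - (u3 + u4)"
        unfolding fX fX0 by (simp add: algebra_simps)
      have "u1 + u2 \<in> B2" using B3(4) u by blast
      then have "(u1 + u2) + (fn N X - fn N X0) \<in> B1" using B2(4) p B3(3) by blast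
      moreover have "u3 + u4 \<in> B1" using B3(4) u' B2(3) by blast
      ultimately show "f X - f X0 \<in> W0" unfolding e using B1(4) by blast
    qed
  qed
  show ?thesis
    unfolding continuous_map_def
  proof (intro conjI allI impI)
    show "(\<lambda>X. dpi \<pi> X y) \<in> topspace TL \<rightarrow> topspace euclidean" by simp
    fix U :: "'y set" assume U: "openin euclidean U"
    show "openin TL {X \<in> topspace TL. dpi \<pi> X y \<in> U}"
    proof (subst openin_subopen, intro ballI)
      fix X1 assume X1: "X1 \<in> {X \<in> topspace TL. dpi \<pi> X y \<in> U}"
      have X1L: "X1 \<in> L" using X1 TL L_def by blast
      define W0 where "W0 = {v. v + f X1 \<in> U}"
      have oW0: "open W0" unfolding W0_def
        using tvs_cont_add[OF tvs, of "f X1"] U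
        by (metis continuous_on_open_vimage open_UNIV Int_UNIV_right vimage_def open_openin)
      have W00: "0 \<in> W0" using X1 unfolding W0_def f_def by simp
      obtain X0 N0 where N0: "openin TL N0" "X0 \<in> N0" "\<forall>X\<in>N0. f X - f X0 \<in> W0"
        using key[OF oW0 W00] by blast
      have X0L: "X0 \<in> L" using openin_subset[OF N0(1)] N0(2) TL L_def by blast
      define K where "K = add X0 (neg X1)"
      have KL: "K \<in> L" unfolding K_def using addL negL X0L X1L by blast
      define T where "T X = add X K" for X
      have Tc: "continuous_map TL TL T"
      proof -
        have "continuous_map TL (prod_topology TL TL) (\<lambda>X. (X, K))"
          using KL TL L_def by (intro continuous_map_pairedI) auto
        from continuous_map_compose[OF this addc]
        have "continuous_map TL TL (\<lambda>X. add X K)" by (simp add: o_def)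
        moreover have "T = (\<lambda>X. add X K)" by (simp add: T_def fun_eq_iff)
        ultimately show ?thesis by simp
      qed
      have TX1: "T X1 = X0"
      proof -
        have "T X1 = add X1 (add (neg X1) X0)" unfolding T_def K_def using comm X0L negL X1L by simp
        also have "\<dots> = add (add X1 (neg X1)) X0" using assoc X0L negL X1L by simp
        also have "\<dots> = X0" using addneg X1L zadd X0L by simp
        finally show ?thesis .
      qed
      have fT: "f (T X) = f X + f X0 - f X1" if "X \<in> L" for X
      proof -
        have "f (T X) = f X + (f X0 + f (neg X1))" unfolding T_def K_def
          using fadd that KL[unfolded K_def] X0L negL[OF X1L] by simp
        then show ?thesis using fneg[OF X1L] by simp
      qed
      define N1 where "N1 = {X \<in> topspace TL. T X \<in> N0}"
      show "\<exists>T'. openin TL T' \<and> X1 \<in> T' \<and> T' \<subseteq> {X \<in> topspace TL. dpi \<pi> X y \<in> U}"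
      proof (intro exI[of _ N1] conjI)
        show "openin TL N1" unfolding N1_def by (rule openin_continuous_map_preimage[OF Tc N0(1)])
        show "X1 \<in> N1" unfolding N1_def using X1 TX1 N0(2) by simp
        show "N1 \<subseteq> {X \<in> topspace TL. dpi \<pi> X y \<in> U}"
        proof
          fix X assume X: "X \<in> N1"
          have XL: "X \<in> L" using X TL L_def N1_def by blast
          have "f (T X) - f X0 \<in> W0" using N0(3) X N1_def by blast
          then have "f X - f X1 \<in> W0" using fT[OF XL] by simp
          then have "f X \<in> U" unfolding W0_def by simp
          then show "X \<in> {X \<in> topspace TL. dpi \<pi> X y \<in> U}" using X N1_def f_def by simp
        qed
      qed
    qed
  qed
qed


theorem theorem3p5:
  fixes G :: "('g, 'm) monoid_scheme" and TG :: "'g topology"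
    and \<pi> :: "'g \<Rightarrow> 'y::{real_vector, t2_space} \<Rightarrow> 'y"
  assumes "topological_group G TG"
    and "topological_vector_space_type TYPE('y)"
    and "locally_convex_type TYPE('y)"
    and "continuous_representation G TG \<pi>"
    and "\<exists>V. openin TG V \<and> \<one>\<^bsub>G\<^esub> \<in> V \<and> equicontinuous_family (\<pi> ` V)"
  shows "D1 G TG \<pi> = D1_lin G TG \<pi> \<and>
    (\<forall>TL :: (real \<Rightarrow> 'g) topology.
        topspace TL = Lie_set G TG \<and> Baire_space TL \<and> finer_than_compact_open G TG TL
      \<and> (\<forall>X1\<in>Lie_set G TG. \<forall>X2\<in>Lie_set G TG. \<exists>X\<in>Lie_set G TG. Lie_sum G TG X X1 X2)
      \<and> Lie_tvs G TG TL
      \<and> metrizable_space (euclidean :: 'y topology)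
      \<longrightarrow> D1 G TG \<pi> = D1_cont G TG TL \<pi>)"
proof -
  obtain V where V: "openin TG V" "\<one>\<^bsub>G\<^esub> \<in> V" "equicontinuous_family (\<pi> ` V)"
    using assms(5) by blast
  have sub: "y \<in> D1_lin G TG \<pi>" if y: "y \<in> D1 G TG \<pi>" for y
    unfolding D1_lin_def
  proof (intro CollectI conjI ballI impI)
    show "y \<in> D1 G TG \<pi>" by (rule y)
    fix X X1 X2 assume XL: "X \<in> Lie_set G TG" "X1 \<in> Lie_set G TG" "X2 \<in> Lie_set G TG"
      and s: "Lie_sum G TG X X1 X2"
    show "dpi \<pi> X y = dpi \<pi> X1 y + dpi \<pi> X2 y"
      by (rule dpi_additive[OF assms(1-4) V y XL s])
  qed
  have eq1: "D1 G TG \<pi> = D1_lin G TG \<pi>"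
    using sub unfolding D1_lin_def by blast
  show ?thesis
  proof (intro conjI allI impI)
    show "D1 G TG \<pi> = D1_lin G TG \<pi>" by (rule eq1)
    fix TL :: "(real \<Rightarrow> 'g) topology"
    assume H: "topspace TL = Lie_set G TG \<and> Baire_space TL \<and> finer_than_compact_open G TG TL
      \<and> (\<forall>X1\<in>Lie_set G TG. \<forall>X2\<in>Lie_set G TG. \<exists>X\<in>Lie_set G TG. Lie_sum G TG X X1 X2)
      \<and> Lie_tvs G TG TL
      \<and> metrizable_space (euclidean :: 'y topology)"
    have "y \<in> D1_cont G TG TL \<pi>" if y: "y \<in> D1 G TG \<pi>" for y
      unfolding D1_cont_def
      using y dpi_cont[OF assms(1-4) V y] H by blast
    then show "D1 G TG \<pi> = D1_cont G TG TL \<pi>" unfolding D1_cont_def by blast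
  qed
qed

end
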